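(* Let $\rho_{ABC}$ be a three-qubit state that is symmetric, i.e. invariant under every permutation of the three qubits. Then none of its three two-qubit reduced states violates the three-settings CJWR linear steering inequality, i.e. $S_{AB}\le 1$, $S_{AC}\le 1$ and $S_{BC}\le 1$.
   Context: For a two-qubit state $\rho$ let $t_{kl}=\mathrm{Tr}[\rho\,\sigma_k\otimes\sigma_l]$ ($k,l\in\{1,2,3\}$, $\sigma_k$ Pauli matrices) and $S(\rho)=\sum_{k,l}t_{kl}^2$. For a three-qubit state, $\rho_{AB},\rho_{AC},\rho_{BC}$ are its two-qubit reduced states and $S_{ij}=S(\rho_{ij})$. The three-settings CJWR linear steering inequality $\frac{1}{\sqrt3}|\sum_{k=1}^3\langle A_k\otimes B_k\rangle|\le1$ (with $A_k=\hat a_k\cdot\vec\sigma$, $\hat a_k$ unit vectors, $B_k=\hat b_k\cdot\vec\sigma$, $\hat b_k$ orthonormal) has maximal left-hand side $\sqrt{S(\rho)}$ over all settings, so it is violated by $\rho$ iff $S(\rho)>1$. *)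

theory Defs
  imports Complex_Main "HOL-Combinatorics.Permutations"
begin

text \<open>Computational basis of one qubit: False = |0>, True = |1>.
  Two-qubit operators are functions on (bool * bool), three-qubit operators
  functions on (bool * bool * bool) (qubits A, B, C in this order).\<close>

type_synonym qb2 = "bool \<times> bool"
type_synonym qb3 = "bool \<times> bool \<times> bool"

definition is_state3 :: "(qb3 \<Rightarrow> qb3 \<Rightarrow> complex) \<Rightarrow> bool" where
  "is_state3 \<rho> \<longleftrightarrow>
     (\<forall>x y. \<rho> y x = cnj (\<rho> x y)) \<and>
     (\<forall>v :: qb3 \<Rightarrow> complex. 0 \<le> Re (\<Sum>x\<in>UNIV. \<Sum>y\<in>UNIV. cnj (v x) * \<rho> x y * v y)) \<and>
     (\<Sum>x\<in>UNIV. \<rho> x x) = 1"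

text \<open>Pauli matrices sigma_1, sigma_2, sigma_3 (entry (r,c)).\<close>
definition pauli :: "nat \<Rightarrow> bool \<Rightarrow> bool \<Rightarrow> complex" where
  "pauli k r c =
     (if k = 1 then (if r \<noteq> c then 1 else 0)
      else if k = 2 then (if r = c then 0 else if r then \<i> else - \<i>)
      else (if r \<noteq> c then 0 else if r then -1 else 1))"

text \<open>t_kl = Tr[rho (sigma_k tensor sigma_l)]; real for Hermitian rho.\<close>
definition tcorr :: "(qb2 \<Rightarrow> qb2 \<Rightarrow> complex) \<Rightarrow> nat \<Rightarrow> nat \<Rightarrow> real" where
  "tcorr \<rho> k l = Re (\<Sum>x\<in>UNIV. \<Sum>y\<in>UNIV.
      \<rho> x y * (pauli k (fst y) (fst x) * pauli l (snd y) (snd x)))"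

definition Sval :: "(qb2 \<Rightarrow> qb2 \<Rightarrow> complex) \<Rightarrow> real" where
  "Sval \<rho> = (\<Sum>k\<in>{1,2,3}. \<Sum>l\<in>{1,2,3}. (tcorr \<rho> k l)\<^sup>2)"

definition red_AB :: "(qb3 \<Rightarrow> qb3 \<Rightarrow> complex) \<Rightarrow> qb2 \<Rightarrow> qb2 \<Rightarrow> complex" where
  "red_AB \<rho> x y = (\<Sum>c\<in>UNIV. \<rho> (fst x, snd x, c) (fst y, snd y, c))"
definition red_AC :: "(qb3 \<Rightarrow> qb3 \<Rightarrow> complex) \<Rightarrow> qb2 \<Rightarrow> qb2 \<Rightarrow> complex" where
  "red_AC \<rho> x y = (\<Sum>b\<in>UNIV. \<rho> (fst x, b, snd x) (fst y, b, snd y))"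
definition red_BC :: "(qb3 \<Rightarrow> qb3 \<Rightarrow> complex) \<Rightarrow> qb2 \<Rightarrow> qb2 \<Rightarrow> complex" where
  "red_BC \<rho> x y = (\<Sum>a\<in>UNIV. \<rho> (a, fst x, snd x) (a, fst y, snd y))"

definition qget :: "qb3 \<Rightarrow> nat \<Rightarrow> bool" where
  "qget x i = (if i = 0 then fst x else if i = 1 then fst (snd x) else snd (snd x))"
definition qperm :: "(nat \<Rightarrow> nat) \<Rightarrow> qb3 \<Rightarrow> qb3" where
  "qperm \<pi> x = (qget x (\<pi> 0), qget x (\<pi> 1), qget x (\<pi> 2))"

definition symmetric3 :: "(qb3 \<Rightarrow> qb3 \<Rightarrow> complex) \<Rightarrow> bool" where
  "symmetric3 \<rho> \<longleftrightarrow>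
     (\<forall>\<pi>. \<pi> permutes {0,1,2} \<longrightarrow> (\<forall>x y. \<rho> (qperm \<pi> x) (qperm \<pi> y) = \<rho> x y))"

end

theory Submission
  imports Defs
begin


lemma sum_bool_expand: "(\<Sum>x\<in>(UNIV::bool set). f x) = f True + f False"
  by (simp add: UNIV_bool add.commute)

lemma sum_pair_expand: "(\<Sum>x\<in>(UNIV::('a::finite \<times> 'b::finite) set). f x) = (\<Sum>a\<in>UNIV. \<Sum>b\<in>UNIV. f (a,b))"
  unfolding UNIV_Times_UNIV[symmetric] sum.cartesian_product by simp

lemma sym_use:
  assumes "symmetric3 \<rho>" "\<pi> permutes {0,1,2}"
  shows "\<rho> (qperm \<pi> x) (qperm \<pi> y) = \<rho> x y"
  using assms unfolding symmetric3_def by blast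

lemma p12: "transpose (1::nat) 2 permutes {0,1,2}" by (rule permutes_swap_id) auto
lemma p01: "transpose (0::nat) 1 permutes {0,1,2}" by (rule permutes_swap_id) auto
lemma pcyc: "(transpose (0::nat) 1 \<circ> transpose 1 2) permutes {0,1,2}"
  by (rule permutes_compose[OF p12 p01])

lemma qp12: "qperm (transpose 1 2) (a,b,c) = (a,c,b)"
  by (simp add: qperm_def qget_def transpose_def)
lemma qp01: "qperm (transpose 0 1) (a,b,c) = (b,a,c)"
  by (simp add: qperm_def qget_def transpose_def)
lemma qpcyc: "qperm (transpose 0 1 \<circ> transpose 1 2) (a,b,c) = (b,c,a)"
  by (simp add: qperm_def qget_def transpose_def)

lemma s12: assumes "symmetric3 \<rho>" shows "\<rho> (a,c,b) (a',c',b') = \<rho> (a,b,c) (a',b',c')"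
  using sym_use[OF assms p12, of "(a,b,c)" "(a',b',c')"] by (simp only: qp12)
lemma s01: assumes "symmetric3 \<rho>" shows "\<rho> (b,a,c) (b',a',c') = \<rho> (a,b,c) (a',b',c')"
  using sym_use[OF assms p01, of "(a,b,c)" "(a',b',c')"] by (simp only: qp01)
lemma scyc: assumes "symmetric3 \<rho>" shows "\<rho> (b,c,a) (b',c',a') = \<rho> (a,b,c) (a',b',c')"
  using sym_use[OF assms pcyc, of "(a,b,c)" "(a',b',c')"] by (simp only: qpcyc)

lemma redAC_eq:
  assumes "symmetric3 \<rho>" shows "red_AC \<rho> = red_AB \<rho>"
  unfolding red_AC_def red_AB_def using s12[OF assms] by simp

lemma redBC_eq:
  assumes "symmetric3 \<rho>" shows "red_BC \<rho> = red_AB \<rho>"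
  unfolding red_BC_def red_AB_def using scyc[OF assms] by simp

lemma redAB_swap:
  assumes "symmetric3 \<rho>" shows "red_AB \<rho> (b,a) (b',a') = red_AB \<rho> (a,b) (a',b')"
  unfolding red_AB_def using s01[OF assms] by simp

lemma tcorr_sym:
  assumes "symmetric3 \<rho>" shows "tcorr (red_AB \<rho>) k l = tcorr (red_AB \<rho>) l k"
  unfolding tcorr_def
  apply (simp only: sum_pair_expand sum_bool_expand)
  apply (simp add: redAB_swap[OF assms] algebra_simps)
  done



definition Tm :: "real \<Rightarrow> real \<Rightarrow> real \<Rightarrow> real \<Rightarrow> real \<Rightarrow> real \<Rightarrow> nat \<Rightarrow> nat \<Rightarrow> real" where
  "Tm a b d e f g k l = (if k = 1 then (if l = 1 then a else if l = 2 then e else f)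
     else if k = 2 then (if l = 1 then e else if l = 2 then b else g)
     else (if l = 1 then f else if l = 2 then g else d))"

definition Yf :: "(nat \<Rightarrow> nat \<Rightarrow> real) \<Rightarrow> qb3 \<Rightarrow> qb3 \<Rightarrow> complex" where
  "Yf T r c = (1/3) * (\<Sum>k\<in>{1,2,3}. \<Sum>l\<in>{1,2,3}. of_real (T k l) *
     (pauli k (fst r) (fst c) * pauli l (fst (snd r)) (fst (snd c)) * (if snd (snd r) = snd (snd c) then 1 else 0)
    + pauli k (fst r) (fst c) * pauli l (snd (snd r)) (snd (snd c)) * (if fst (snd r) = fst (snd c) then 1 else 0)
    + pauli k (fst (snd r)) (fst (snd c)) * pauli l (snd (snd r)) (snd (snd c)) * (if fst r = fst c then 1 else 0)))"

definition vec8 :: "complex list \<Rightarrow> qb3 \<Rightarrow> complex" where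
  "vec8 L x = L ! ((if fst x then 4 else 0) + (if fst (snd x) then 2 else 0) + (if snd (snd x) then 1 else 0))"

definition Kf :: "real \<Rightarrow> real \<Rightarrow> real \<Rightarrow> real \<Rightarrow> real \<Rightarrow> real \<Rightarrow> qb3 \<Rightarrow> qb3 \<Rightarrow> complex" where
  "Kf a b d e f g x y = (let
     A0 = Complex (2*d - a - b - 2) 0; B0 = Complex (a - b) (2*e); C0 = Complex (2*f) (2*g);
     D0 = Complex (a + b - 2*d - 2) 0; cB = cnj B0; cC = cnj C0;
     tau = (a + b + d) / 3; N = a^2 + b^2 + d^2 + 2*e^2 + 2*f^2 + 2*g^2;
     als = 3/2 * (tau - 1/3)^2; alw = 3/2 * (tau + 1/3)^2 + (N - 3*tau^2)/2 + 1/3;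
     vs = [(1/12, [A0, C0, C0, B0, C0, B0, B0, 0]),
           (1/12, [0, cB, cB, -cC, cB, -cC, -cC, A0]),
           (1/36, [3*cC, D0, D0, 0, D0, 0, 0, 3*B0]),
           (1/36, [3*cB, 0, 0, D0, 0, D0, D0, -3*C0]),
           (als, [1,0,0,0,0,0,0,0]), (als, [0,0,0,0,0,0,0,1]),
           (als/3, [0,1,1,0,1,0,0,0]), (als/3, [0,0,0,1,0,1,1,0]),
           (alw/2, [0,1,-1,0,0,0,0,0]), (alw/6, [0,1,1,0,-2,0,0,0]),
           (alw/2, [0,0,0,1,0,-1,0,0]), (alw/6, [0,0,0,1,0,1,-2,0])]
   in (\<Sum>p\<leftarrow>vs. of_real (fst p) * cnj (vec8 (snd p) x) * vec8 (snd p) y))"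

lemma entry:
  "Kf a b d e f g (x1,x2,x3) (y1,y2,y3) =
     of_real ((1 + (a^2 + b^2 + d^2 + 2*e^2 + 2*f^2 + 2*g^2))/2) * (if (x1,x2,x3) = (y1,y2,y3) then 1 else 0)
     - Yf (Tm a b d e f g) (y1,y2,y3) (x1,x2,x3)"
  apply (cases x1; cases x2; cases x3; cases y1; cases y2; cases y3)
  apply (simp_all add: Kf_def Yf_def Tm_def vec8_def pauli_def Let_def complex_eq_iff)
  apply (simp_all add: field_simps power2_eq_square)
  done



lemma quad_nonneg:
  assumes "is_state3 \<rho>"
  shows "0 \<le> Re (\<Sum>x\<in>UNIV. \<Sum>y\<in>UNIV. \<rho> x y * (cnj (v x) * v y))"
proof -
  have "0 \<le> Re (\<Sum>x\<in>UNIV. \<Sum>y\<in>UNIV. cnj (v x) * \<rho> x y * v y)"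
    using assms unfolding is_state3_def by blast
  also have "(\<Sum>x\<in>UNIV. \<Sum>y\<in>UNIV. cnj (v x) * \<rho> x y * v y) = (\<Sum>x\<in>UNIV. \<Sum>y\<in>UNIV. \<rho> x y * (cnj (v x) * v y))"
    by (simp add: algebra_simps)
  finally show ?thesis .
qed

lemma list_nonneg:
  assumes "is_state3 \<rho>" "\<forall>p\<in>set vs. 0 \<le> fst p"
  shows "0 \<le> Re (\<Sum>x\<in>UNIV. \<Sum>y\<in>UNIV. \<rho> x y *
     (\<Sum>p\<leftarrow>vs. of_real (fst p) * cnj (vec8 (snd p) x) * vec8 (snd p) y))"
  using assms(2)
proof (induction vs)
  case Nil
  then show ?case by simp
next
  case (Cons q vs)
  let ?v = "vec8 (snd q)"
  have e: "(\<Sum>x\<in>UNIV. \<Sum>y\<in>UNIV. \<rho> x y *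
     (\<Sum>p\<leftarrow>q#vs. of_real (fst p) * cnj (vec8 (snd p) x) * vec8 (snd p) y))
    = of_real (fst q) * (\<Sum>x\<in>UNIV. \<Sum>y\<in>UNIV. \<rho> x y * (cnj (?v x) * ?v y))
      + (\<Sum>x\<in>UNIV. \<Sum>y\<in>UNIV. \<rho> x y *
     (\<Sum>p\<leftarrow>vs. of_real (fst p) * cnj (vec8 (snd p) x) * vec8 (snd p) y))"
    by (simp add: sum_distrib_left sum.distrib algebra_simps)
  have "0 \<le> fst q * Re (\<Sum>x\<in>UNIV. \<Sum>y\<in>UNIV. \<rho> x y * (cnj (?v x) * ?v y))"
    using Cons.prems quad_nonneg[OF assms(1)] by simp
  moreover have "0 \<le> Re (\<Sum>x\<in>UNIV. \<Sum>y\<in>UNIV. \<rho> x y *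
     (\<Sum>p\<leftarrow>vs. of_real (fst p) * cnj (vec8 (snd p) x) * vec8 (snd p) y))"
    using Cons by simp
  ultimately show ?case unfolding e by simp
qed

lemma Kf_nonneg:
  assumes "is_state3 \<rho>"
  shows "0 \<le> Re (\<Sum>x\<in>UNIV. \<Sum>y\<in>UNIV. \<rho> x y * Kf a b d e f g x y)"
proof -
  have N: "0 \<le> (a^2 + b^2 + d^2 + 2*e^2 + 2*f^2 + 2*g^2) - 3 * ((a+b+d)/3)^2"
  proof -
    have "(a^2 + b^2 + d^2) - 3 * ((a+b+d)/3)^2 = ((a-b)^2 + (b-d)^2 + (a-d)^2)/3"
      by (simp add: power2_eq_square field_simps)
    moreover have "0 \<le> ((a-b)^2 + (b-d)^2 + (a-d)^2)/3" by simp
    ultimately show ?thesis by (smt (verit) zero_le_power2)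
  qed
  show ?thesis
    unfolding Kf_def Let_def
    by (rule list_nonneg[OF assms]) (use N in \<open>auto intro!: add_nonneg_nonneg\<close>)
qed



lemma AB_term:
  "(\<Sum>x\<in>UNIV. \<Sum>y\<in>UNIV. \<rho> x y * (pauli k (fst y) (fst x) * pauli l (fst (snd y)) (fst (snd x)) * (if snd (snd y) = snd (snd x) then 1 else 0)))
   = (\<Sum>x\<in>UNIV. \<Sum>y\<in>UNIV. red_AB \<rho> x y * (pauli k (fst y) (fst x) * pauli l (snd y) (snd x)))"
  by (simp only: sum_pair_expand sum_bool_expand) (simp add: red_AB_def sum_bool_expand algebra_simps)

lemma AC_term:
  "(\<Sum>x\<in>UNIV. \<Sum>y\<in>UNIV. \<rho> x y * (pauli k (fst y) (fst x) * pauli l (snd (snd y)) (snd (snd x)) * (if fst (snd y) = fst (snd x) then 1 else 0)))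
   = (\<Sum>x\<in>UNIV. \<Sum>y\<in>UNIV. red_AC \<rho> x y * (pauli k (fst y) (fst x) * pauli l (snd y) (snd x)))"
  by (simp only: sum_pair_expand sum_bool_expand) (simp add: red_AC_def sum_bool_expand algebra_simps)

lemma BC_term:
  "(\<Sum>x\<in>UNIV. \<Sum>y\<in>UNIV. \<rho> x y * (pauli k (fst (snd y)) (fst (snd x)) * pauli l (snd (snd y)) (snd (snd x)) * (if fst y = fst x then 1 else 0)))
   = (\<Sum>x\<in>UNIV. \<Sum>y\<in>UNIV. red_BC \<rho> x y * (pauli k (fst y) (fst x) * pauli l (snd y) (snd x)))"
  by (simp only: sum_pair_expand sum_bool_expand) (simp add: red_BC_def sum_bool_expand algebra_simps)

lemma Y_trace:
  "Re (\<Sum>x\<in>UNIV. \<Sum>y\<in>UNIV. \<rho> x y * Yf T y x) =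
   (\<Sum>k\<in>{1,2,3}. \<Sum>l\<in>{1,2,3}. T k l * ((tcorr (red_AB \<rho>) k l + tcorr (red_AC \<rho>) k l + tcorr (red_BC \<rho>) k l) / 3))"
proof -
  have "(\<Sum>x\<in>UNIV. \<Sum>y\<in>UNIV. \<rho> x y * Yf T y x) =
    (\<Sum>k\<in>{1,2,3}. \<Sum>l\<in>{1,2,3}. of_real (T k l) * (1/3) *
      ((\<Sum>x\<in>UNIV. \<Sum>y\<in>UNIV. \<rho> x y * (pauli k (fst y) (fst x) * pauli l (fst (snd y)) (fst (snd x)) * (if snd (snd y) = snd (snd x) then 1 else 0)))
     + (\<Sum>x\<in>UNIV. \<Sum>y\<in>UNIV. \<rho> x y * (pauli k (fst y) (fst x) * pauli l (snd (snd y)) (snd (snd x)) * (if fst (snd y) = fst (snd x) then 1 else 0)))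
     + (\<Sum>x\<in>UNIV. \<Sum>y\<in>UNIV. \<rho> x y * (pauli k (fst (snd y)) (fst (snd x)) * pauli l (snd (snd y)) (snd (snd x)) * (if fst y = fst x then 1 else 0)))))"
    unfolding Yf_def
    by (simp add: sum_distrib_left sum_distrib_right sum.distrib algebra_simps sum.swap[of _ "{1,2,3}"])
  also have "\<dots> = (\<Sum>k\<in>{1,2,3}. \<Sum>l\<in>{1,2,3}. of_real (T k l) * (1/3) *
      ((\<Sum>x\<in>UNIV. \<Sum>y\<in>UNIV. red_AB \<rho> x y * (pauli k (fst y) (fst x) * pauli l (snd y) (snd x)))
     + (\<Sum>x\<in>UNIV. \<Sum>y\<in>UNIV. red_AC \<rho> x y * (pauli k (fst y) (fst x) * pauli l (snd y) (snd x)))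
     + (\<Sum>x\<in>UNIV. \<Sum>y\<in>UNIV. red_BC \<rho> x y * (pauli k (fst y) (fst x) * pauli l (snd y) (snd x)))))"
    by (simp only: AB_term AC_term BC_term)
  finally show ?thesis
    by (simp add: tcorr_def Re_sum)
qed

lemma entry_all:
  "Kf a b d e f g x y =
     of_real ((1 + (a^2 + b^2 + d^2 + 2*e^2 + 2*f^2 + 2*g^2))/2) * (if x = y then 1 else 0)
     - Yf (Tm a b d e f g) y x"
  using entry[of a b d e f g "fst x" "fst (snd x)" "snd (snd x)" "fst y" "fst (snd y)" "snd (snd y)"]
  by simp

lemma key:
  assumes st: "is_state3 \<rho>" and sy: "symmetric3 \<rho>"
  shows "Sval (red_AB \<rho>) \<le> 1"
proof -
  define t where "t = tcorr (red_AB \<rho>)"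
  define a where "a = t 1 1"
  define b where "b = t 2 2"
  define d where "d = t 3 3"
  define e where "e = t 1 2"
  define f where "f = t 1 3"
  define g where "g = t 2 3"
  have ts: "t k l = t l k" for k l unfolding t_def by (rule tcorr_sym[OF sy])
  define c where "c = (1 + (a^2 + b^2 + d^2 + 2*e^2 + 2*f^2 + 2*g^2))/2"
  have tr: "Re (\<Sum>x\<in>UNIV. \<rho> x x) = 1" using st unfolding is_state3_def by simp
  have "0 \<le> Re (\<Sum>x\<in>UNIV. \<Sum>y\<in>UNIV. \<rho> x y * Kf a b d e f g x y)"
    by (rule Kf_nonneg[OF st])
  also have "(\<Sum>x\<in>UNIV. \<Sum>y\<in>UNIV. \<rho> x y * Kf a b d e f g x y)
     = of_real c * (\<Sum>x\<in>UNIV. \<rho> x x) - (\<Sum>x\<in>UNIV. \<Sum>y\<in>UNIV. \<rho> x y * Yf (Tm a b d e f g) y x)"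
  proof -
    have pt: "\<rho> x y * Kf a b d e f g x y = of_real c * (if x = y then \<rho> x y else 0) - \<rho> x y * Yf (Tm a b d e f g) y x" for x y
      unfolding entry_all c_def by (simp add: algebra_simps)
    have d: "(\<Sum>x\<in>UNIV. \<Sum>y\<in>UNIV. (if x = y then \<rho> x y else 0)) = (\<Sum>x\<in>UNIV. \<rho> x x)"
      by simp
    show ?thesis
      by (simp only: pt sum_subtractf sum_distrib_left[symmetric] d)
  qed
  finally have 1: "0 \<le> c - Re (\<Sum>x\<in>UNIV. \<Sum>y\<in>UNIV. \<rho> x y * Yf (Tm a b d e f g) y x)"
    using tr by simp
  have 2: "Re (\<Sum>x\<in>UNIV. \<Sum>y\<in>UNIV. \<rho> x y * Yf (Tm a b d e f g) y x)
     = (\<Sum>k\<in>{1,2,3}. \<Sum>l\<in>{1,2,3}. Tm a b d e f g k l * t k l)"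
    unfolding Y_trace redAC_eq[OF sy] redBC_eq[OF sy] t_def by simp
  have S: "Sval (red_AB \<rho>) = a^2 + b^2 + d^2 + 2*e^2 + 2*f^2 + 2*g^2"
    unfolding Sval_def t_def[symmetric] a_def b_def d_def e_def f_def g_def
    using ts[of 2 1] ts[of 3 1] ts[of 3 2] by simp
  have 3: "(\<Sum>k\<in>{1,2,3}. \<Sum>l\<in>{1,2,3}. Tm a b d e f g k l * t k l) = a^2 + b^2 + d^2 + 2*e^2 + 2*f^2 + 2*g^2"
    unfolding a_def b_def d_def e_def f_def g_def
    using ts[of 2 1] ts[of 3 1] ts[of 3 2] by (simp add: Tm_def power2_eq_square)
  show ?thesis using 1 2 3 S unfolding c_def by simp
qed

theorem corollary1:
  fixes \<rho> :: "qb3 \<Rightarrow> qb3 \<Rightarrow> complex"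
  assumes "is_state3 \<rho>" and "symmetric3 \<rho>"
  shows "Sval (red_AB \<rho>) \<le> 1 \<and> Sval (red_AC \<rho>) \<le> 1 \<and> Sval (red_BC \<rho>) \<le> 1"
  using key[OF assms] redAC_eq[OF assms(2)] redBC_eq[OF assms(2)] by simp

end
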